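(* Let $\varphi$ be a rational self-map of $\mathbb{D}$ having order of contact $n$ (even) with $\partial\mathbb{D}$ at $\zeta\in\partial\mathbb{D}$. Then $D_{n-1}(\varphi,\zeta)=D_{n-1}(\varphi_e,\zeta)$ and $\varphi^{(n)}(\zeta)\neq\varphi_e^{(n)}(\zeta)$.
   Context: $\varphi_e=\rho\circ\varphi\circ\rho$ with $\rho(z)=1/\bar z$. For $h$ analytic at $z$, $D_k(h,z)=(h(z),h'(z),\dots,h^{(k)}(z))$. Order of contact $n$ at $\zeta$: $\varphi(\zeta)\in\partial\mathbb{D}$ and $\frac{1-|\varphi(e^{i\theta})|^2}{|\varphi(\zeta)-\varphi(e^{i\theta})|^n}$ is bounded above and away from zero as $e^{i\theta}\to\zeta$. *)

theory Defs
  imports "HOL-Analysis.Analysis" "HOL-Computational_Algebra.Polynomial_Factorial"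
begin

definition rho :: "complex \<Rightarrow> complex" where
  "rho z = 1 / cnj z"

definition phi_e :: "(complex \<Rightarrow> complex) \<Rightarrow> complex \<Rightarrow> complex" where
  "phi_e \<phi> = rho \<circ> \<phi> \<circ> rho"

definition Dvec :: "nat \<Rightarrow> (complex \<Rightarrow> complex) \<Rightarrow> complex \<Rightarrow> complex list" where
  "Dvec k h z = map (\<lambda>j. (deriv ^^ j) h z) [0..<Suc k]"

definition rational_selfmap_disc :: "(complex \<Rightarrow> complex) \<Rightarrow> bool" where
  "rational_selfmap_disc \<phi> \<longleftrightarrow>
     (\<exists>p q :: complex poly. coprime p q \<and> (\<forall>z. \<phi> z = poly p z / poly q z) \<and>
        (\<forall>z\<in>ball 0 1. poly q z \<noteq> 0 \<and> \<phi> z \<in> ball 0 1))"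

definition order_of_contact :: "(complex \<Rightarrow> complex) \<Rightarrow> nat \<Rightarrow> complex \<Rightarrow> bool" where
  "order_of_contact \<phi> n \<zeta> \<longleftrightarrow> norm (\<phi> \<zeta>) = 1 \<and>
     (\<exists>c C. 0 < c \<and> 0 < C \<and>
        (\<forall>\<^sub>F w in at \<zeta> within sphere 0 1.
           c \<le> (1 - (norm (\<phi> w))\<^sup>2) / (norm (\<phi> \<zeta> - \<phi> w)) ^ n \<and>
           (1 - (norm (\<phi> w))\<^sup>2) / (norm (\<phi> \<zeta> - \<phi> w)) ^ n \<le> C))"

end

theory Submission imports Defs "HOL-Complex_Analysis.Complex_Analysis" begin


lemma sphere_limpt:
  assumes "\<zeta> \<in> sphere (0::complex) 1"
  shows "at \<zeta> within sphere 0 1 \<noteq> bot"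
proof -
  have "\<zeta> islimpt sphere (0::complex) 1"
  proof (rule connected_imp_perfect[OF _ assms])
    show "connected (sphere (0::complex) 1)" by (rule connected_sphere) simp
    fix x :: complex
    show "sphere 0 1 \<noteq> {x}"
    proof
      assume h: "sphere (0::complex) 1 = {x}"
      have "1 \<in> sphere (0::complex) 1" "-1 \<in> sphere (0::complex) 1" by auto
      then show False using h by auto
    qed
  qed
  then show ?thesis using trivial_limit_within by blast
qed


lemma factor_derivs:
  fixes f g :: "complex \<Rightarrow> complex"
  assumes e: "e > 0" and g: "g holomorphic_on ball z e"
    and fac: "\<And>w. w \<in> ball z e \<Longrightarrow> f w = (w - z)^k * g w"
  shows "(deriv ^^ i) f z = (if k \<le> i then of_nat (i choose k) * fact k * (deriv ^^ (i - k)) g z else 0)"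
proof -
  have "eventually (\<lambda>w. w \<in> ball z e) (nhds z)"
    using e by (intro eventually_nhds_in_open) auto
  hence "eventually (\<lambda>w. f w = (w-z) ^ k * g w) (nhds z)"
    using fac by (rule eventually_mono) 
  hence "(deriv ^^ i) f z = (deriv ^^ i) (\<lambda>w. (w-z) ^ k * g w) z"
    by (rule higher_deriv_cong_ev) simp
  also have "\<dots> = (\<Sum>j=0..i. of_nat (i choose j) *
                     (deriv ^^ j) (\<lambda>w. (w-z) ^ k) z * (deriv ^^ (i - j)) g z)"
    by (rule higher_deriv_mult[of _ "ball z e"]) (use g e in \<open>auto intro!: holomorphic_intros\<close>)
  also have "\<dots> = (\<Sum>j=0..i. if j = k then
                  of_nat (i choose k) * fact k * (deriv ^^ (i - k)) g z else 0)"
  proof (intro sum.cong refl)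
    fix j
    have "(deriv ^^ j) (\<lambda>w. (w-z) ^ k) z =
            pochhammer (of_nat (Suc k - j)) j * 0 ^ (k - j)"
      by (subst higher_deriv_power) simp
    also have "\<dots> = (if j = k then fact j else 0)"
      by (cases "j < k"; cases "j = k") (auto simp: pochhammer_0_left pochhammer_fact)
    finally show "of_nat (i choose j) * (deriv ^^ j) (\<lambda>w. (w-z) ^ k) z * (deriv ^^ (i - j)) g z = (if j = k then
                  of_nat (i choose k) * fact k * (deriv ^^ (i - k)) g z else 0)" by simp
  qed
  also have "\<dots> = (if k \<le> i then of_nat (i choose k) * fact k * (deriv ^^ (i - k)) g z else 0)"
    by (subst sum.delta) auto
  finally show ?thesis .
qed

lemma outward:
  fixes h :: "complex \<Rightarrow> complex"
  assumes e: "e > 0" and hc: "continuous_on (ball \<zeta> e) h" and z1: "norm \<zeta> = 1"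
    and b1: "norm b = 1" and a: "h \<zeta> \<noteq> 0" and m: "m \<ge> 2"
  shows "\<exists>z\<in>ball \<zeta> e. norm z < 1 \<and> norm (b + (z - \<zeta>)^m * h z) > 1"
proof -
  define w where "w = cnj b * h \<zeta> * (-\<zeta>)^m"
  have b0: "b \<noteq> 0" using b1 by auto
  have z0: "\<zeta> \<noteq> 0" using z1 by auto
  have w0: "w \<noteq> 0" using b0 z0 a by (simp add: w_def)
  define \<alpha> where "\<alpha> = Arg w"
  define \<theta> where "\<theta> = -3*\<alpha>/(4*real m)"
  define v where "v = cis \<theta>"
  define u where "u = -\<zeta> * v"
  have \<alpha>b: "-pi < \<alpha>" "\<alpha> \<le> pi" using Arg_bounded[of w] by (auto simp: \<alpha>_def)
  have mpos: "real m \<ge> 2" using m by simp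
  have th1: "\<bar>\<theta>\<bar> \<le> 3*pi/8"
  proof -
    have "\<bar>\<theta>\<bar> = 3*\<bar>\<alpha>\<bar>/(4*real m)" using mpos by (simp add: \<theta>_def abs_divide abs_mult)
    also have "\<dots> \<le> 3*pi/(4*2)"
      using \<alpha>b mpos by (intro frac_le) auto
    finally show ?thesis by simp
  qed
  have cth: "cos \<theta> > 0"
    using th1 pi_gt_zero by (intro cos_gt_zero_pi) linarith+
  have wpolar: "w = of_real (norm w) * cis \<alpha>"
    using w0 by (simp add: \<alpha>_def cis_Arg sgn_eq)
  have vm: "v^m = cis (real m * \<theta>)" by (simp add: v_def Complex.DeMoivre)
  have mth: "real m * \<theta> = -3*\<alpha>/4" using mpos by (simp add: \<theta>_def field_simps)
  have wv: "w * v^m = of_real (norm w) * cis (\<alpha>/4)"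
  proof -
    have "w * v^m = of_real (norm w) * (cis \<alpha> * cis (-3*\<alpha>/4))"
      using wpolar vm mth by simp
    also have "cis \<alpha> * cis (-3*\<alpha>/4) = cis (\<alpha>/4)" by (simp add: cis_mult)
    finally show ?thesis .
  qed
  have c4: "cos (\<alpha>/4) > 0"
    using \<alpha>b pi_gt_zero by (intro cos_gt_zero_pi) linarith+
  have ReW: "Re (w * v^m) > 0"
    using wv c4 w0 by simp
  have key: "cnj b * h \<zeta> * u^m = w * v^m"
    by (simp add: u_def w_def power_mult_distrib[symmetric])
  have nv: "norm v = 1" by (simp add: v_def)
  have nu: "norm u = 1" using nv z1 by (simp add: u_def norm_mult)
  define zt where "zt = (\<lambda>t::real. \<zeta> + of_real t * u)"
  have zlim: "(zt \<longlongrightarrow> \<zeta>) (at_right 0)"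
    unfolding zt_def by (auto intro!: tendsto_eq_intros)
  have hcont: "isCont h \<zeta>"
    using hc e continuous_on_eq_continuous_at[of "ball \<zeta> e" h] by auto
  have "((\<lambda>t. Re (cnj b * h (zt t) * u^m)) \<longlongrightarrow> Re (cnj b * h \<zeta> * u^m)) (at_right 0)"
    by (intro tendsto_intros isCont_tendsto_compose[OF hcont zlim])
  then have ev1: "eventually (\<lambda>t. Re (cnj b * h (zt t) * u^m) > 0) (at_right 0)"
    using ReW key by (intro order_tendstoD(1)) auto
  define d where "d = min e (2 * cos \<theta>)"
  have d0: "d > 0" using e cth by (simp add: d_def)
  have ev2: "eventually (\<lambda>t::real. 0 < t \<and> t < d) (at_right 0)"
    using d0 by (auto simp: eventually_at_right intro!: exI[of _ d])
  have "eventually (\<lambda>t. Re (cnj b * h (zt t) * u^m) > 0 \<and> 0 < t \<and> t < d) (at_right 0)"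
    using ev1 ev2 by (rule eventually_conj)
  then obtain t where t: "Re (cnj b * h (zt t) * u^m) > 0" "0 < t" "t < d"
    using eventually_happens trivial_limit_at_right_real by blast
  define z where "z = zt t"
  have "z \<in> ball \<zeta> e"
    using t nu by (simp add: z_def zt_def dist_norm norm_mult d_def)
  moreover have "norm z < 1"
  proof -
    have "z = \<zeta> * (1 - of_real t * v)" by (simp add: z_def zt_def u_def algebra_simps)
    then have "norm z = norm (1 - of_real t * v)" using z1 by (simp add: norm_mult)
    moreover have "(norm (1 - of_real t * v))^2 = 1 - 2 * t * cos \<theta> + t^2"
    proof -
      have "(norm (1 - of_real t * v))^2 = (1 - t * cos \<theta>)^2 + (t * sin \<theta>)^2"
        by (simp add: cmod_power2 v_def)
      also have "\<dots> = 1 - 2 * t * cos \<theta> + t^2 * ((sin \<theta>)^2 + (cos \<theta>)^2)"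
        by algebra
      finally show ?thesis by simp
    qed
    moreover have "1 - 2 * t * cos \<theta> + t^2 < 1"
    proof -
      have "t < 2 * cos \<theta>" using t by (simp add: d_def)
      then have "t * t < t * (2 * cos \<theta>)" using t by (intro mult_strict_left_mono) auto
      then show ?thesis by (simp add: power2_eq_square algebra_simps)
    qed
    ultimately have "(norm z)^2 < 1" by simp
    then show ?thesis
      by (metis abs_norm_cancel abs_square_less_1)
  qed
  moreover have "norm (b + (z - \<zeta>)^m * h z) > 1"
  proof -
    define A where "A = cnj b * h z * u^m"
    have bb: "b * cnj b = 1"
      using complex_norm_square[of b] b1 by simp
    have "b + (z - \<zeta>)^m * h z = b * (1 + of_real (t^m) * A)"
      by (simp add: z_def zt_def A_def power_mult_distrib algebra_simps)
        (simp add: bb mult.assoc[symmetric] mult.commute[of _ b] mult.left_commute[of _ b])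
    then have "norm (b + (z - \<zeta>)^m * h z) = norm (1 + of_real (t^m) * A)"
      using b1 by (simp add: norm_mult)
    also have "\<dots> \<ge> Re (1 + of_real (t^m) * A)" by (rule complex_Re_le_cmod)
    finally have "norm (b + (z - \<zeta>)^m * h z) \<ge> 1 + t^m * Re A" by simp
    moreover have "t^m * Re A > 0" using t by (simp add: A_def z_def)
    ultimately show ?thesis by linarith
  qed
  ultimately show ?thesis by blast
qed
lemma inv_cnj_unit:
  fixes w :: complex
  assumes "norm w = 1" shows "1 / cnj w = w"
proof -
  have "w * cnj w = 1" using complex_norm_square[of w] assms by simp
  moreover have "cnj w \<noteq> 0" using assms by auto
  ultimately show ?thesis by (simp add: field_simps)
qed

lemma norm_sub_refl:
  fixes a :: complex
  assumes "a \<noteq> 0" shows "norm (a - 1 / cnj a) = \<bar>1 - (norm a)^2\<bar> / norm a"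
proof -
  have ca: "cnj a \<noteq> 0" using assms by auto
  have "a - 1 / cnj a = (a * cnj a - 1) / cnj a" using ca by (simp add: field_simps)
  also have "a * cnj a = of_real ((norm a)^2)" using complex_norm_square[of a] by simp
  finally have "a - 1 / cnj a = of_real ((norm a)^2 - 1) / cnj a" by simp
  then have "norm (a - 1 / cnj a) = norm (of_real ((norm a)^2 - 1) :: complex) / norm (cnj a)"
    by (simp only: norm_divide)
  also have "\<dots> = \<bar>(norm a)^2 - 1\<bar> / norm a" by (simp only: norm_of_real complex_mod_cnj)
  finally show ?thesis by (simp add: abs_minus_commute)
qed

lemma isCont_of_hol_ball:
  assumes "g holomorphic_on ball z r" "r > 0" shows "isCont g z"
proof -
  have "continuous_on (ball z r) g" using holomorphic_on_imp_continuous_on[OF assms(1)] .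
  then have "\<forall>x\<in>ball z r. isCont g x" by (simp add: continuous_on_eq_continuous_at)
  then show ?thesis using assms(2) by simp
qed

theorem mainTheorem11:
  fixes \<phi> :: "complex \<Rightarrow> complex" and n :: nat and \<zeta> :: complex
  assumes "rational_selfmap_disc \<phi>"
    and "\<zeta> \<in> sphere 0 1"
    and "even n"
    and "order_of_contact \<phi> n \<zeta>"
  shows "Dvec (n - 1) \<phi> \<zeta> = Dvec (n - 1) (phi_e \<phi>) \<zeta>
         \<and> (deriv ^^ n) \<phi> \<zeta> \<noteq> (deriv ^^ n) (phi_e \<phi>) \<zeta>"
proof -
  from assms(1) obtain p q :: "complex poly" where
    phi: "\<And>z. \<phi> z = poly p z / poly q z" and
    disc: "\<And>z. z \<in> ball 0 1 \<Longrightarrow> poly q z \<noteq> 0 \<and> \<phi> z \<in> ball 0 1"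
    unfolding rational_selfmap_disc_def by blast
  from assms(4) obtain c C where n1: "norm (\<phi> \<zeta>) = 1" and c: "0 < c" and C: "0 < C" and
    evc: "\<forall>\<^sub>F w in at \<zeta> within sphere 0 1. c \<le> (1 - (norm (\<phi> w))\<^sup>2) / (norm (\<phi> \<zeta> - \<phi> w)) ^ n \<and> (1 - (norm (\<phi> w))\<^sup>2) / (norm (\<phi> \<zeta> - \<phi> w)) ^ n \<le> C"
    unfolding order_of_contact_def by blast
  have z1: "norm \<zeta> = 1" using assms(2) by simp
  have z0: "\<zeta> \<noteq> 0" using z1 by auto
  have qz: "poly q \<zeta> \<noteq> 0" using n1 phi[of \<zeta>] by auto
  have pz: "poly p \<zeta> \<noteq> 0" using n1 phi[of \<zeta>] by auto
  define pc where "pc = map_poly cnj p"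
  define qc where "qc = map_poly cnj q"
  define \<psi> where "\<psi> = (\<lambda>z. poly qc (1/z) / poly pc (1/z))"
  have psi_eq: "phi_e \<phi> = \<psi>"
  proof
    fix z
    show "phi_e \<phi> z = \<psi> z"
      by (simp add: phi_e_def rho_def phi \<psi>_def pc_def qc_def)
  qed
  have sph: "\<psi> w = 1 / cnj (\<phi> w)" if "norm w = 1" for w
  proof -
    have "\<psi> w = phi_e \<phi> w" by (simp add: psi_eq)
    also have "\<dots> = 1 / cnj (\<phi> w)"
      using inv_cnj_unit[OF that] by (simp add: phi_e_def rho_def)
    finally show ?thesis .
  qed
  have pcz: "poly pc (1/\<zeta>) \<noteq> 0"
    using pz inv_cnj_unit[OF z1] by (simp add: pc_def)
  define Xf where "Xf = (\<lambda>z. poly q z * z * poly pc (1/z))"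
  have cpc: "isCont (\<lambda>z. poly pc (1/z)) \<zeta>"
    by (rule isCont_o2[where f="\<lambda>z. 1/z"]) (use z0 in \<open>auto intro!: continuous_intros\<close>)
  then have "isCont Xf \<zeta>" unfolding Xf_def by (intro isCont_mult cpc poly_isCont continuous_ident)
  moreover have "Xf \<zeta> \<noteq> 0" using qz z0 pcz by (simp add: Xf_def)
  ultimately obtain r0 where r0: "r0 > 0" and r0b: "\<And>y. dist \<zeta> y < r0 \<Longrightarrow> Xf y \<noteq> 0"
    using continuous_at_avoid[of \<zeta> Xf 0] by blast
  have inB: "poly q y \<noteq> 0 \<and> y \<noteq> 0 \<and> poly pc (1/y) \<noteq> 0" if "y \<in> ball \<zeta> r0" for y
    using r0b[of y] that by (simp add: Xf_def)
  have hol_phi: "\<phi> holomorphic_on ball \<zeta> r0"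
  proof -
    have "(\<lambda>z. poly p z / poly q z) holomorphic_on ball \<zeta> r0"
      using inB by (auto intro!: holomorphic_intros)
    then show ?thesis using phi by (simp add: phi[abs_def])
  qed
  have h1: "(\<lambda>z. 1/z) holomorphic_on ball \<zeta> r0"
    by (rule holomorphic_on_divide) (use inB in \<open>auto intro: holomorphic_intros\<close>)
  have hol_psi: "\<psi> holomorphic_on ball \<zeta> r0"
    unfolding \<psi>_def
    by (rule holomorphic_on_divide[OF poly_holomorphic_on[OF h1] poly_holomorphic_on[OF h1]]) (use inB in auto)
  define f where "f = (\<lambda>z. \<phi> z - \<psi> z)"
  have hol_f: "f holomorphic_on ball \<zeta> r0"
    unfolding f_def using hol_phi hol_psi by (intro holomorphic_intros)
  have fsph: "f w = \<phi> w - 1 / cnj (\<phi> w)" if "norm w = 1" for w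
    using sph[OF that] by (simp add: f_def)
  have fz: "f \<zeta> = 0" using fsph[OF z1] inv_cnj_unit[OF n1] by simp
  define F where "F = at \<zeta> within sphere (0::complex) 1"
  have Fnb: "F \<noteq> bot" unfolding F_def using sphere_limpt[OF assms(2)] .
  have nhF: "eventually P F" if "eventually P (nhds \<zeta>)" for P
    unfolding F_def eventually_at_filter using that by (rule eventually_mono) auto
  have evS: "eventually (\<lambda>w. w \<in> sphere 0 1 \<and> w \<noteq> \<zeta>) F"
    unfolding F_def eventually_at_filter by simp
  have evB: "eventually (\<lambda>w. w \<in> ball \<zeta> r) F" if "r > 0" for r
    using that by (intro nhF eventually_nhds_in_open) auto
  have contF: "(g \<longlongrightarrow> g \<zeta>) F" if "isCont g \<zeta>" for g :: "complex \<Rightarrow> 'b::topological_space"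
    unfolding F_def using that continuous_at_imp_continuous_at_within continuous_within by blast
  define N where "N = (\<lambda>w. 1 - (norm (\<phi> w))\<^sup>2)"
  define D where "D = (\<lambda>w. (norm (\<phi> \<zeta> - \<phi> w)) ^ n)"
  have evND: "eventually (\<lambda>w. N w > 0 \<and> D w > 0 \<and> c \<le> N w / D w \<and> N w / D w \<le> C) F"
    using evc unfolding F_def[symmetric]
  proof (rule eventually_mono)
    fix w assume h: "c \<le> (1 - (norm (\<phi> w))\<^sup>2) / (norm (\<phi> \<zeta> - \<phi> w)) ^ n \<and> (1 - (norm (\<phi> w))\<^sup>2) / (norm (\<phi> \<zeta> - \<phi> w)) ^ n \<le> C"
    then have "0 < N w / D w" using c unfolding N_def D_def by linarith
    moreover have "D w \<ge> 0" by (simp add: D_def)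
    ultimately have "N w > 0 \<and> D w > 0" by (auto simp: zero_less_divide_iff)
    then show "N w > 0 \<and> D w > 0 \<and> c \<le> N w / D w \<and> N w / D w \<le> C" using h unfolding N_def D_def by auto
  qed
  have cphi: "isCont \<phi> \<zeta>" by (rule isCont_of_hol_ball[OF hol_phi r0])
  have "((\<lambda>w. norm (\<phi> w)) \<longlongrightarrow> norm (\<phi> \<zeta>)) F" by (intro tendsto_intros contF cphi)
  then have evphi: "eventually (\<lambda>w. norm (\<phi> w) > 1/2) F"
    using n1 by (intro order_tendstoD(1)) auto
  have "eventually (\<lambda>w. (w \<in> sphere 0 1 \<and> w \<noteq> \<zeta>) \<and> w \<in> ball \<zeta> r0 \<and>
      (N w > 0 \<and> D w > 0 \<and> c \<le> N w / D w \<and> N w / D w \<le> C) \<and> norm (\<phi> w) > 1/2) F"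
    by (intro eventually_conj evS evB r0 evND evphi)
  then obtain w0 where w0: "w0 \<in> sphere 0 1" "w0 \<in> ball \<zeta> r0" "N w0 > 0" "norm (\<phi> w0) > 1/2"
    using eventually_happens Fnb by blast
  have w0n: "norm w0 = 1" using w0 by simp
  have "norm (\<phi> w0) < 1" using w0(3) unfolding N_def
    by (metis abs_norm_cancel abs_square_less_1 diff_gt_0_iff_gt)
  then have phiw0: "\<phi> w0 \<noteq> \<phi> \<zeta>" using n1 by auto
  have fw0: "f w0 \<noteq> 0"
  proof
    assume "f w0 = 0"
    then have "norm (\<phi> w0 - 1 / cnj (\<phi> w0)) = 0" using fsph[OF w0n] by simp
    moreover have "\<phi> w0 \<noteq> 0" using w0(4) by auto
    ultimately have "\<bar>1 - (norm (\<phi> w0))^2\<bar> / norm (\<phi> w0) = 0" using norm_sub_refl by simp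
    then show False using w0(3) w0(4) unfolding N_def by simp
  qed
  have zb: "\<zeta> \<in> ball \<zeta> r0" using r0 by simp
  have "\<not> f constant_on ball \<zeta> r0"
  proof
    assume "f constant_on ball \<zeta> r0"
    then obtain c0 where "\<forall>x\<in>ball \<zeta> r0. f x = c0" unfolding constant_on_def by blast
    then have "f w0 = f \<zeta>" using w0(2) zb by simp
    then show False using fw0 fz by simp
  qed
  note nc1 = this
  obtain g r1 k where k: "0 < k" and r1: "0 < r1" "ball \<zeta> r1 \<subseteq> ball \<zeta> r0"
    and hol_g: "g holomorphic_on ball \<zeta> r1"
    and facf: "\<And>w. w \<in> ball \<zeta> r1 \<Longrightarrow> f w = (w - \<zeta>)^k * g w"
    and gnz: "\<And>w. w \<in> ball \<zeta> r1 \<Longrightarrow> g w \<noteq> 0"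
    by (rule holomorphic_factor_zero_nonconstant[OF hol_f open_ball connected_ball zb fz nc1]) blast
  have hol_phi2: "(\<lambda>z. \<phi> z - \<phi> \<zeta>) holomorphic_on ball \<zeta> r0"
    using hol_phi by (intro holomorphic_intros)
  have "\<not> (\<lambda>z. \<phi> z - \<phi> \<zeta>) constant_on ball \<zeta> r0"
  proof
    assume "(\<lambda>z. \<phi> z - \<phi> \<zeta>) constant_on ball \<zeta> r0"
    then obtain c0 where "\<forall>x\<in>ball \<zeta> r0. \<phi> x - \<phi> \<zeta> = c0" unfolding constant_on_def by blast
    then have "\<phi> w0 - \<phi> \<zeta> = \<phi> \<zeta> - \<phi> \<zeta>" using w0(2) zb by metis
    then show False using phiw0 by simp
  qed
  note nc2 = this
  obtain h r2 m where m: "0 < m" and r2: "0 < r2" "ball \<zeta> r2 \<subseteq> ball \<zeta> r0"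
    and hol_h: "h holomorphic_on ball \<zeta> r2"
    and fach: "\<And>w. w \<in> ball \<zeta> r2 \<Longrightarrow> \<phi> w - \<phi> \<zeta> = (w - \<zeta>)^m * h w"
    and hnz: "\<And>w. w \<in> ball \<zeta> r2 \<Longrightarrow> h w \<noteq> 0"
    by (rule holomorphic_factor_zero_nonconstant[OF hol_phi2 open_ball connected_ball zb diff_self nc2]) blast
  have m1: "m = 1"
  proof (rule ccontr)
    assume "m \<noteq> 1"
    then have "m \<ge> 2" using m by linarith
    from outward[OF r2(1) holomorphic_on_imp_continuous_on[OF hol_h] z1 n1 hnz[OF centre_in_ball[THEN iffD2, OF r2(1)]] this]
    obtain z where z: "z \<in> ball \<zeta> r2" "norm z < 1" "norm (\<phi> \<zeta> + (z - \<zeta>)^m * h z) > 1" by blast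
    have "\<phi> z = \<phi> \<zeta> + (z - \<zeta>)^m * h z" using fach[OF z(1)] by (simp add: algebra_simps)
    then have "norm (\<phi> z) > 1" using z(3) by simp
    moreover have "\<phi> z \<in> ball 0 1" using disc[of z] z(2) by simp
    ultimately show False by simp
  qed
  have kn: "k = n"
  proof -
    define r3 where "r3 = min r1 r2"
    have r3: "r3 > 0" using r1 r2 by (simp add: r3_def)
    have cg: "isCont g \<zeta>" by (rule isCont_of_hol_ball[OF hol_g r1(1)])
    have ch: "isCont h \<zeta>" by (rule isCont_of_hol_ball[OF hol_h r2(1)])
    have gz': "g \<zeta> \<noteq> 0" using gnz r1(1) by simp
    have hz': "h \<zeta> \<noteq> 0" using hnz r2(1) by simp
    define R where "R = (\<lambda>w. N w / D w)"
    define G where "G = (\<lambda>w. norm (g w) * norm (\<phi> w))"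
    define H where "H = (\<lambda>w. norm (h w) ^ n)"
    have Rform: "R w = norm (w - \<zeta>)^k * G w / (norm (w - \<zeta>)^n * H w) \<and> G w > 0 \<and> H w > 0 \<and> norm (w - \<zeta>) > 0"
      if w: "norm w = 1" "w \<noteq> \<zeta>" "w \<in> ball \<zeta> r3" "N w > 0" "norm (\<phi> w) > 1/2" for w
    proof -
      have wb1: "w \<in> ball \<zeta> r1" and wb2: "w \<in> ball \<zeta> r2" using w(3) by (auto simp: r3_def)
      have pw0: "\<phi> w \<noteq> 0" using w(5) by auto
      have "norm (f w) = \<bar>N w\<bar> / norm (\<phi> w)"
        using fsph[OF w(1)] norm_sub_refl[OF pw0] unfolding N_def by simp
      then have "norm (f w) = N w / norm (\<phi> w)" using w(4) by simp
      then have Nw: "N w = norm (f w) * norm (\<phi> w)" using pw0 by (simp add: field_simps)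
      have "norm (f w) = norm (w-\<zeta>)^k * norm (g w)" using facf[OF wb1] by (simp add: norm_mult norm_power)
      then have Nw2: "N w = norm (w-\<zeta>)^k * G w" using Nw by (simp add: G_def)
      have "\<phi> \<zeta> - \<phi> w = - ((w - \<zeta>) * h w)" using fach[OF wb2] m1 by (simp add: algebra_simps)
      then have Dw: "D w = norm (w - \<zeta>)^n * H w"
        by (simp add: D_def H_def norm_mult power_mult_distrib)
      have "G w > 0" using gnz[OF wb1] pw0 by (simp add: G_def)
      moreover have "H w > 0" using hnz[OF wb2] by (simp add: H_def)
      moreover have "norm (w - \<zeta>) > 0" using w(2) by simp
      ultimately show ?thesis by (simp add: R_def Nw2 Dw)
    qed
    have evR: "eventually (\<lambda>w. c \<le> R w \<and> R w \<le> C \<and>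
        R w = norm (w - \<zeta>)^k * G w / (norm (w - \<zeta>)^n * H w) \<and> G w > 0 \<and> H w > 0 \<and> norm (w - \<zeta>) > 0) F"
    proof -
      have "eventually (\<lambda>w. (w \<in> sphere 0 1 \<and> w \<noteq> \<zeta>) \<and> w \<in> ball \<zeta> r3 \<and>
          (N w > 0 \<and> D w > 0 \<and> c \<le> N w / D w \<and> N w / D w \<le> C) \<and> norm (\<phi> w) > 1/2) F"
        by (intro eventually_conj evS evB r3 evND evphi)
      then show ?thesis
      proof (rule eventually_mono)
        fix w assume a: "(w \<in> sphere 0 1 \<and> w \<noteq> \<zeta>) \<and> w \<in> ball \<zeta> r3 \<and>
          (N w > 0 \<and> D w > 0 \<and> c \<le> N w / D w \<and> N w / D w \<le> C) \<and> norm (\<phi> w) > 1/2"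
        then have "norm w = 1" by simp
        with a Rform[of w] show "c \<le> R w \<and> R w \<le> C \<and>
          R w = norm (w - \<zeta>)^k * G w / (norm (w - \<zeta>)^n * H w) \<and> G w > 0 \<and> H w > 0 \<and> norm (w - \<zeta>) > 0"
          by (simp add: R_def)
      qed
    qed
    have idF: "((\<lambda>w. w) \<longlongrightarrow> \<zeta>) F" using contF[of "\<lambda>w. w"] by simp
    have nlim: "((\<lambda>w. norm (w - \<zeta>)^j) \<longlongrightarrow> 0) F" if "j > 0" for j
    proof -
      have A: "((\<lambda>w. norm (w - \<zeta>)^j) \<longlongrightarrow> norm (\<zeta> - \<zeta>)^j) F"
        by (intro tendsto_intros idF)
      have B: "norm (\<zeta> - \<zeta>)^j = 0" using that by simp
      show ?thesis using A unfolding B .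
    qed
    have Glim: "(G \<longlongrightarrow> G \<zeta>) F" unfolding G_def by (intro tendsto_intros contF cg cphi)
    have Hlim: "(H \<longlongrightarrow> H \<zeta>) F" unfolding H_def by (intro tendsto_intros contF ch)
    have Gz: "G \<zeta> \<noteq> 0" using gz' n1 by (simp add: G_def)
    have Hz: "H \<zeta> \<noteq> 0" using hz' by (simp add: H_def)
    show ?thesis
    proof (rule linorder_cases[of k n])
      assume kn: "k < n"
      have "((\<lambda>w. norm (w - \<zeta>)^(n-k) * (H w / G w)) \<longlongrightarrow> 0 * (H \<zeta> / G \<zeta>)) F"
        by (intro tendsto_intros nlim Hlim Glim Gz) (use kn in simp)
      then have "eventually (\<lambda>w. norm (w - \<zeta>)^(n-k) * (H w / G w) < 1 / C) F"
        using C by (intro order_tendstoD(2)) auto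
      with evR have "eventually (\<lambda>w. False) F"
      proof (rule eventually_elim2)
        fix w assume a: "c \<le> R w \<and> R w \<le> C \<and>
          R w = norm (w - \<zeta>)^k * G w / (norm (w - \<zeta>)^n * H w) \<and> G w > 0 \<and> H w > 0 \<and> norm (w - \<zeta>) > 0"
          and b: "norm (w - \<zeta>)^(n-k) * (H w / G w) < 1 / C"
        define t where "t = norm (w - \<zeta>)"
        have t: "t > 0" using a by (simp add: t_def)
        have "t^n = t^(n-k) * t^k" using kn by (simp add: power_add[symmetric])
        then have "1 / R w = t^(n-k) * (H w / G w)" using a t by (simp add: t_def[symmetric] field_simps)
        moreover have "R w > 0" using a c by linarith
        ultimately have "1 / C \<le> t^(n-k) * (H w / G w)" using a
          by (metis frac_le less_eq_real_def zero_less_one)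
        then show False using b by (simp add: t_def)
      qed
      then show ?thesis using Fnb by simp
    next
      assume kn: "k > n"
      have "((\<lambda>w. norm (w - \<zeta>)^(k-n) * (G w / H w)) \<longlongrightarrow> 0 * (G \<zeta> / H \<zeta>)) F"
        by (intro tendsto_intros nlim Hlim Glim Hz) (use kn in simp)
      then have "eventually (\<lambda>w. norm (w - \<zeta>)^(k-n) * (G w / H w) < c) F"
        using c by (intro order_tendstoD(2)) auto
      with evR have "eventually (\<lambda>w. False) F"
      proof (rule eventually_elim2)
        fix w assume a: "c \<le> R w \<and> R w \<le> C \<and>
          R w = norm (w - \<zeta>)^k * G w / (norm (w - \<zeta>)^n * H w) \<and> G w > 0 \<and> H w > 0 \<and> norm (w - \<zeta>) > 0"
          and b: "norm (w - \<zeta>)^(k-n) * (G w / H w) < c"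
        define t where "t = norm (w - \<zeta>)"
        have t: "t > 0" using a by (simp add: t_def)
        have "t^k = t^(k-n) * t^n" using kn by (simp add: power_add[symmetric])
        then have "R w = t^(k-n) * (G w / H w)" using a t by (simp add: t_def[symmetric] field_simps)
        then show False using a b by (simp add: t_def)
      qed
      then show ?thesis using Fnb by simp
    qed simp
  qed
  have derf: "(deriv ^^ i) f \<zeta> = (deriv ^^ i) \<phi> \<zeta> - (deriv ^^ i) (phi_e \<phi>) \<zeta>" for i
    unfolding f_def psi_eq
    using higher_deriv_diff[OF hol_phi hol_psi open_ball centre_in_ball[THEN iffD2, OF r0]] by simp
  have derk: "(deriv ^^ i) f \<zeta> = (if k \<le> i then of_nat (i choose k) * fact k * (deriv ^^ (i - k)) g \<zeta> else 0)" for i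
    by (rule factor_derivs[OF r1(1) hol_g facf])
  have gz: "g \<zeta> \<noteq> 0" using gnz r1(1) by simp
  show ?thesis
  proof
    show "Dvec (n - 1) \<phi> \<zeta> = Dvec (n - 1) (phi_e \<phi>) \<zeta>"
      unfolding Dvec_def
    proof (rule map_cong[OF refl])
      fix j assume "j \<in> set [0..<Suc (n - 1)]"
      then have "j < k" using k kn by auto
      then show "(deriv ^^ j) \<phi> \<zeta> = (deriv ^^ j) (phi_e \<phi>) \<zeta>" using derf[of j] derk[of j] by simp
    qed
    show "(deriv ^^ n) \<phi> \<zeta> \<noteq> (deriv ^^ n) (phi_e \<phi>) \<zeta>"
    proof
      assume e: "(deriv ^^ n) \<phi> \<zeta> = (deriv ^^ n) (phi_e \<phi>) \<zeta>"
      have "(fact n :: complex) * g \<zeta> = 0" using derf[of n] derk[of n] kn e by simp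
      moreover have "(fact n :: complex) \<noteq> 0" by (rule fact_nonzero)
      ultimately show False using gz by simp
    qed
  qed
qed
end
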